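(* Let $k\ge2$ and $r\ge0$, and set $\alpha=1-2^{-k}$ and $$\beta=\sum_{j=1}^k\frac{j}{2^j}+\frac{k+1}{2^k}\;\Big(=2-\frac1{2^k}\Big).$$ Let $X$ be a strongly-stable sequence with respect to the $(k,r)$-tree $T_r$ that is a whole multiple of its atomic sequence. Then $$\hat c(GF,X,T_r)=2^k\beta(1-\alpha^r)+\alpha^r.$$ In asymptotic terms, $\hat c(GF,X,T_r)=\Theta(2^k(1-\alpha^r))$.
   Context: Binary search tree model. An algorithm $A$ serves a query sequence $X=[x_1,\dots,x_m]$ from an initial BST $T_0$. Before serving $x_t$ it holds a BST $T_{t-1}$; it searches $x_t$ from the root and may then restructure the tree by rotations into $T_t$. Let $P_t$ be the set of nodes on the root-to-$x_t$ path of $T_{t-1}$, and let $U_t$ be the node set of the minimal subtree containing all edges rotated in transforming $T_{t-1}$ into $T_t$. The cost at time $t$ is $|P_t\cup U_t|$, and $\hat c(A,X,T_0)$ is the total cost divided by $m$. Greedy Future ($GF$). After finding $x_t$ in $T_{t-1}$, let $v_1<\dots<v_k$ be the keys on the root-to-$x_t$ path, set $v_0=-\infty$ and $v_{k+1}=+\infty$, and let $R_0,\dots,R_k$ be the subtrees hanging off this path. For each $i$, $\tau(v_i)$ is the smallest $s>t$ with $x_s\in(v_{i-1},v_{i+1})$, or $+\infty$ if there is none. $GF$ rearranges $v_1,\dots,v_k$ as a treap: a BST in key order and a heap in $\tau$, with the smallest $\tau$ at the top. Ties in $\tau$ are broken in favor of the node of smaller depth in $T_{t-1}$. It then reattaches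 $R_0,\dots,R_k$ unchanged at their unique positions, giving $T_t$. $(k,r)$-trees. Let $k\ge2$ and $r\ge0$ be integers. $T_0$ is a single node. For $r\ge1$, $T_r$ has $k$ trunk nodes $w_1,\dots,w_k$: $w_1$ is the root, $w_2$ is the right child of $w_1$, and $w_{j+1}$ is the left child of $w_j$ for $2\le j\le k-1$. The left child of $w_k$ is a single leaf (the actual leaf). Each of the remaining $k$ child positions of trunk nodes (the left child of $w_1$ and the right child of $w_j$ for $2\le j\le k$) is the root of a copy of $T_{r-1}$. Keys are $1,\dots,|T_r|$ in symmetric order. Stable sequences. Let $T$ be a full binary search tree, and let $X$ be a query sequence consisting only of keys stored at leaves of $T$. For an inner node $v$, let $X_v$ be the subsequence of $X$ consisting of the queries to keys in the subtree of $v$. The node $v$ is strongly-stable if consecutive queries of $X_v$ alternate between the left and right subtrees of $v$. $X$ is strongly-stable if every inner node of $T$ is strongly-stable. The atomic sequence is the shortest such sequence all of whose repetitions are again strongly-stable for $T$. $X$ is a whole multiple of it if it is a concatenation of copies of it. *)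

theory Defs
  imports Complex_Main "HOL-Library.Tree" "HOL-Library.Extended_Nat" "HOL-Library.Product_Lexorder"
begin

fun search_path :: "nat tree \<Rightarrow> nat \<Rightarrow> nat list" where
  "search_path Leaf x = []"
| "search_path (Node l a r) x =
     (if x = a then [a] else if x < a then a # search_path l x else a # search_path r x)"

definition depth_of :: "nat tree \<Rightarrow> nat \<Rightarrow> nat" where
  "depth_of T v = length (search_path T v) - 1"

(* path keys v_1 < ... < v_k (sorted) and hanging subtrees R_0, ..., R_k in key order *)
fun path_split :: "nat tree \<Rightarrow> nat \<Rightarrow> nat list \<times> nat tree list" where
  "path_split Leaf x = ([], [Leaf])"
| "path_split (Node l a r) x =
     (if x = a then ([a], [l, r])
      else if x < a then (let (ks, ss) = path_split l x in (ks @ [a], ss @ [r]))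
      else (let (ks, ss) = path_split r x in (a # ks, l # ss)))"

(* y lies in the open interval (v_{i-1}, v_{i+1}) (0-based index i into vs),
   with v_0 = -infinity and v_{k+1} = +infinity *)
definition in_window :: "nat list \<Rightarrow> nat \<Rightarrow> nat \<Rightarrow> bool" where
  "in_window vs i y \<longleftrightarrow> (i = 0 \<or> vs ! (i - 1) < y) \<and> (length vs \<le> Suc i \<or> y < vs ! Suc i)"

(* tau of the i-th path key, measured as offset into the future queries fut = [x_{t+1},...,x_m];
   infinity if no future query falls in the window *)
definition tau :: "nat list \<Rightarrow> nat list \<Rightarrow> nat \<Rightarrow> enat" where
  "tau fut vs i =
     (if \<exists>s < length fut. in_window vs i (fut ! s)
      then enat (LEAST s. s < length fut \<and> in_window vs i (fut ! s))
      else \<infinity>)"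

(* treap construction: keys in order with priorities (tau, depth), lexicographic, smallest at top;
   ss are the subtrees to be reattached (one more than keys). First argument is fuel. *)
primrec build :: "nat \<Rightarrow> (nat \<times> (enat \<times> nat)) list \<Rightarrow> nat tree list \<Rightarrow> nat tree" where
  "build 0 vps ss = hd ss"
| "build (Suc n) vps ss =
     (if vps = [] then hd ss else
      (let i = (LEAST i. i < length vps \<and> (\<forall>j < length vps. snd (vps ! i) \<le> snd (vps ! j)))
       in Node (build n (take i vps) (take (Suc i) ss)) (fst (vps ! i))
               (build n (drop (Suc i) vps) (drop (Suc i) ss))))"

definition gf_step :: "nat tree \<Rightarrow> nat \<Rightarrow> nat list \<Rightarrow> nat tree" where
  "gf_step T x fut =
     (let (vs, ss) = path_split T x;
          vps = map (\<lambda>i. (vs ! i, (tau fut vs i, depth_of T (vs ! i)))) [0..<length vs]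
      in build (length vs) vps ss)"

(* total cost of GF; the cost at each step is |P_t u U_t| = |P_t|, since GF only
   rearranges the nodes of the search path *)
fun gf_total :: "nat tree \<Rightarrow> nat list \<Rightarrow> nat" where
  "gf_total T [] = 0"
| "gf_total T (x # xs) = card (set (search_path T x)) + gf_total (gf_step T x xs) xs"

definition cost_hat_GF :: "nat list \<Rightarrow> nat tree \<Rightarrow> real" where
  "cost_hat_GF X T0 = real (gf_total T0 X) / real (length X)"

(* (k,r)-trees: shapes, then keys 1..|T_r| in symmetric order *)
primrec chain :: "unit tree \<Rightarrow> nat \<Rightarrow> unit tree" where
  "chain S 0 = Node Leaf () Leaf"
| "chain S (Suc m) = Node (chain S m) () S"

primrec kr_shape :: "nat \<Rightarrow> nat \<Rightarrow> unit tree" where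
  "kr_shape k 0 = Node Leaf () Leaf"
| "kr_shape k (Suc r) = Node (kr_shape k r) () (chain (kr_shape k r) (k - 1))"

fun label :: "unit tree \<Rightarrow> nat \<Rightarrow> nat tree \<times> nat" where
  "label Leaf n = (Leaf, n)"
| "label (Node l u r) n =
     (let (l', n1) = label l n; (r', n2) = label r (Suc n1) in (Node l' n1 r', n2))"

definition kr_tree :: "nat \<Rightarrow> nat \<Rightarrow> nat tree" where
  "kr_tree k r = fst (label (kr_shape k r) 1)"

definition leaf_keys :: "nat tree \<Rightarrow> nat set" where
  "leaf_keys T = {a. Node Leaf a Leaf \<in> subtrees T}"

definition alternates :: "nat tree \<Rightarrow> nat tree \<Rightarrow> nat list \<Rightarrow> bool" where
  "alternates l r xs \<longleftrightarrow>
     (\<forall>i. Suc i < length xs \<longrightarrow>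
        (xs ! i \<in> set_tree l \<and> xs ! Suc i \<in> set_tree r) \<or>
        (xs ! i \<in> set_tree r \<and> xs ! Suc i \<in> set_tree l))"

definition strongly_stable :: "nat tree \<Rightarrow> nat list \<Rightarrow> bool" where
  "strongly_stable T X \<longleftrightarrow>
     set X \<subseteq> leaf_keys T \<and>
     (\<forall>l a r. Node l a r \<in> subtrees T \<and> (l \<noteq> Leaf \<or> r \<noteq> Leaf) \<longrightarrow>
        alternates l r (filter (\<lambda>x. x \<in> set_tree (Node l a r)) X))"

definition rep_stable :: "nat tree \<Rightarrow> nat list \<Rightarrow> bool" where
  "rep_stable T A \<longleftrightarrow> A \<noteq> [] \<and> (\<forall>j \<ge> 1. strongly_stable T (concat (replicate j A)))"

definition atomic_seq :: "nat tree \<Rightarrow> nat list \<Rightarrow> bool" where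
  "atomic_seq T A \<longleftrightarrow> rep_stable T A \<and> (\<forall>B. rep_stable T B \<longrightarrow> length A \<le> length B)"

definition whole_multiple_of_atomic :: "nat tree \<Rightarrow> nat list \<Rightarrow> bool" where
  "whole_multiple_of_atomic T X \<longleftrightarrow>
     (\<exists>A n. atomic_seq T A \<and> n \<ge> 1 \<and> X = concat (replicate n A))"

end

theory Submission
  imports Defs
begin


lemma subtrees_trans: "s \<in> subtrees t \<Longrightarrow> u \<in> subtrees s \<Longrightarrow> u \<in> subtrees t"
  by (induction t) auto

lemma bst_subtree: "bst t \<Longrightarrow> s \<in> subtrees t \<Longrightarrow> bst s"
  by (induction t) auto

lemma set_tree_subtree: "s \<in> subtrees t \<Longrightarrow> set_tree s \<subseteq> set_tree t"
  by (induction t) auto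

lemma path_split_len: "length (snd (path_split T x)) = Suc (length (fst (path_split T x)))"
  by (induction T x rule: path_split.induct) (auto split: prod.splits)

lemma path_split_set: "set (fst (path_split T x)) \<subseteq> set_tree T"
  by (induction T x rule: path_split.induct) (auto split: prod.splits)

lemma path_split_sorted: "bst T \<Longrightarrow> sorted_wrt (<) (fst (path_split T x))"
proof (induction T x rule: path_split.induct)
  case (1 x) then show ?case by simp
next
  case (2 l a r x)
  show ?case
  proof (cases "x = a")
    case True then show ?thesis by simp
  next
    case False
    note ps = path_split_set[of l x] path_split_set[of r x]
    show ?thesis using 2 False ps
      by (auto split: prod.splits simp: sorted_wrt_append)
  qed
qed

lemma search_path_distinct: "bst T \<Longrightarrow> distinct (search_path T x)"
proof (induction T)
  case Leaf then show ?case by simp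
next
  case (Node l a r)
  have "set (search_path l x) \<subseteq> set_tree l" "set (search_path r x) \<subseteq> set_tree r"
    by (induction l; auto) (induction r; auto)
  with Node show ?case by auto
qed

lemma search_path_sub: "set (search_path T x) \<subseteq> set_tree T"
  by (induction T) auto

lemma search_path_ne: "v \<in> set_tree T \<Longrightarrow> search_path T v \<noteq> []"
  by (induction T) auto



fun heapP :: "(nat \<Rightarrow> 'p::linorder) \<Rightarrow> nat tree \<Rightarrow> nat \<Rightarrow> bool" where
  "heapP P Leaf x = True"
| "heapP P (Node l a r) x =
    (if x = a then True
     else if x < a then (\<forall>v\<in>set (fst (path_split l x)). P a < P v) \<and> heapP P l x
     else (\<forall>v\<in>set (fst (path_split r x)). P a < P v) \<and> heapP P r x)"

lemma build_triv: "build n [] [t] = t"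
  by (cases n) auto

lemma build_path:
  "heapP P T x \<Longrightarrow> length (fst (path_split T x)) \<le> n \<Longrightarrow>
   build n (map (\<lambda>v. (v, P v)) (fst (path_split T x))) (snd (path_split T x)) = T"
proof (induction T arbitrary: n)
  case Leaf then show ?case by (cases n) auto
next
  case (Node l a r)
  obtain m where n: "n = Suc m" using Node.prems by (cases n) (auto split: prod.splits if_splits)
  show ?case
  proof (cases "x = a")
    case True
    have L: "(LEAST i. i < Suc 0 \<and> (\<forall>j<Suc 0. snd ([(a, P a)] ! i) \<le> snd ([(a, P a)] ! j))) = 0"
      by (rule Least_equality) auto
    show ?thesis using True by (simp add: n L build_triv)
  next
    case False
    show ?thesis
    proof (cases "x < a")
      case True
      obtain ks ss where ps: "path_split l x = (ks, ss)" by fastforce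
      have lss: "length ss = Suc (length ks)" using path_split_len[of l x] ps by simp
      have hp: "\<forall>v\<in>set ks. P a < P v" "heapP P l x" using Node.prems True False ps by auto
      have len: "length ks \<le> m" using Node.prems True False ps n by auto
      let ?vps = "map (\<lambda>v. (v, P v)) ks @ [(a, P a)]"
      have L: "(LEAST i. i < length ?vps \<and> (\<forall>j<length ?vps. snd (?vps ! i) \<le> snd (?vps ! j))) = length ks"
      proof (rule Least_equality)
        show "length ks < length ?vps \<and> (\<forall>j<length ?vps. snd (?vps ! length ks) \<le> snd (?vps ! j))"
          using hp(1) by (auto simp: nth_append less_Suc_eq intro: less_imp_le)
      next
        fix y assume y: "y < length ?vps \<and> (\<forall>j<length ?vps. snd (?vps ! y) \<le> snd (?vps ! j))"
        show "length ks \<le> y"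
        proof (rule ccontr)
          assume "\<not> length ks \<le> y"
          then have "y < length ks" by simp
          moreover have "snd (?vps ! y) \<le> snd (?vps ! length ks)" using y by auto
          ultimately show False using hp(1) by (auto simp: nth_append) (meson leD nth_mem)
        qed
      qed
      have "build m (map (\<lambda>v. (v, P v)) ks) ss = l"
        using Node.IH(1)[OF hp(2)] len ps by simp
      moreover have "build (Suc m) ?vps (ss @ [r]) = Node (build m (take (length ks) ?vps) (take (Suc (length ks)) (ss@[r]))) (fst (?vps ! length ks)) (build m (drop (Suc (length ks)) ?vps) (drop (Suc (length ks)) (ss@[r])))"
        by (simp only: build.simps(2) Let_def L) simp
      ultimately show ?thesis using True False ps lss
        by (simp add: n build_triv nth_append)
    next
      case gt: False
      obtain ks ss where ps: "path_split r x = (ks, ss)" by fastforce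
      have lss: "length ss = Suc (length ks)" using path_split_len[of r x] ps by simp
      have hp: "\<forall>v\<in>set ks. P a < P v" "heapP P r x" using Node.prems gt False ps by auto
      have len: "length ks \<le> m" using Node.prems gt False ps n by auto
      let ?vps = "(a, P a) # map (\<lambda>v. (v, P v)) ks"
      have L: "(LEAST i. i < length ?vps \<and> (\<forall>j<length ?vps. snd (?vps ! i) \<le> snd (?vps ! j))) = 0"
      proof (rule Least_equality)
        show "0 < length ?vps \<and> (\<forall>j<length ?vps. snd (?vps ! 0) \<le> snd (?vps ! j))"
          using hp(1) by (auto simp: nth_Cons split: nat.splits intro: less_imp_le)
      qed auto
      have "build m (map (\<lambda>v. (v, P v)) ks) ss = r"
        using Node.IH(2)[OF hp(2)] len ps by simp
      moreover have "build (Suc m) ?vps (l # ss) = Node (build m (take 0 ?vps) (take (Suc 0) (l # ss))) (fst (?vps ! 0)) (build m (drop (Suc 0) ?vps) (drop (Suc 0) (l # ss)))"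
        by (simp only: build.simps(2) Let_def L) simp
      ultimately show ?thesis using gt False ps lss
        by (simp add: n build_triv nth_append)
    qed
  qed
qed



definition idx :: "nat list \<Rightarrow> nat \<Rightarrow> nat" where
  "idx vs v = (LEAST i. i < length vs \<and> vs ! i = v)"

lemma idx_nth: "distinct vs \<Longrightarrow> i < length vs \<Longrightarrow> idx vs (vs ! i) = i"
  unfolding idx_def
  by (rule Least_equality) (auto simp: nth_eq_iff_index_eq leI)

definition Alt :: "nat tree \<Rightarrow> nat \<Rightarrow> nat list \<Rightarrow> bool" where
  "Alt T x fut \<longleftrightarrow> (\<forall>l a r. Node l a r \<in> subtrees T \<longrightarrow>
     (x \<in> set_tree l \<longrightarrow> (\<forall>s<length fut. fut ! s \<in> set_tree l \<longrightarrow> (\<exists>s'<s. fut ! s' \<in> set_tree r))) \<and>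
     (x \<in> set_tree r \<longrightarrow> (\<forall>s<length fut. fut ! s \<in> set_tree r \<longrightarrow> (\<exists>s'<s. fut ! s' \<in> set_tree l))))"

lemma tau_le:
  assumes "\<And>s. s < length fut \<Longrightarrow> in_window vs j (fut ! s) \<Longrightarrow> \<exists>s'<s. in_window vs i (fut ! s')"
  shows "tau fut vs i \<le> tau fut vs j"
proof (cases "\<exists>s < length fut. in_window vs j (fut ! s)")
  case False then show ?thesis by (auto simp: tau_def)
next
  case True
  define s0 where "s0 = (LEAST s. s < length fut \<and> in_window vs j (fut ! s))"
  have s0: "s0 < length fut" "in_window vs j (fut ! s0)"
    using LeastI_ex[OF True] unfolding s0_def by auto
  obtain s' where s': "s' < s0" "in_window vs i (fut ! s')" using assms[OF s0] by blast
  have ex: "\<exists>s < length fut. in_window vs i (fut ! s)" using s' s0 by (meson less_trans)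
  have "(LEAST s. s < length fut \<and> in_window vs i (fut ! s)) \<le> s'"
    by (rule Least_le) (use s' s0 in auto)
  then show ?thesis using True ex s' unfolding tau_def s0_def[symmetric] by simp
qed

lemma prio_less:
  fixes t1 t2 :: enat and d1 d2 :: nat
  shows "t1 \<le> t2 \<Longrightarrow> d1 < d2 \<Longrightarrow> (t1, d1) < (t2, d2)"
  by (auto simp: less_prod_def)



lemma sorted_less_distinct: "sorted_wrt (<) (xs::nat list) \<Longrightarrow> distinct xs"
  by (induction xs) auto

lemma self_sub: "t \<in> subtrees t" by (cases t) auto

lemma heap_main:
  fixes T :: "nat tree" and x :: nat and fut :: "nat list"
  defines "vs \<equiv> fst (path_split T x)"
  defines "P \<equiv> (\<lambda>v. (tau fut vs (idx vs v), depth_of T v))"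
  assumes bst: "bst T" and fsub: "set fut \<subseteq> set_tree T" and alt: "Alt T x fut"
  shows "S \<in> subtrees T \<Longrightarrow> x \<in> set_tree S \<Longrightarrow> vs = pre @ fst (path_split S x) @ suf \<Longrightarrow>
    (\<forall>p\<in>set pre. \<forall>y\<in>set_tree S. p < y) \<Longrightarrow> (\<forall>q\<in>set suf. \<forall>y\<in>set_tree S. y < q) \<Longrightarrow>
    (\<forall>y\<in>set_tree T. (pre = [] \<or> last pre < y) \<and> (suf = [] \<or> y < hd suf) \<longrightarrow> y \<in> set_tree S) \<Longrightarrow>
    (\<forall>v\<in>set_tree S. search_path T v = pfx @ search_path S v) \<Longrightarrow> heapP P S x"
proof (induction S arbitrary: pre suf pfx)
  case Leaf then show ?case by simp
next
  case (Node l a r)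
  have sortv: "sorted_wrt (<) vs" unfolding vs_def using path_split_sorted[OF bst] .
  then have distv: "distinct vs" by (rule sorted_less_distinct)
  have bstS: "bst (Node l a r)" using bst_subtree[OF bst Node.prems(1)] .
  then have sl: "\<forall>y\<in>set_tree l. y < a" and sr: "\<forall>y\<in>set_tree r. a < y" by auto
  have subl: "l \<in> subtrees T" and subr: "r \<in> subtrees T"
    using subtrees_trans[OF Node.prems(1), of l] subtrees_trans[OF Node.prems(1), of r] self_sub by auto
  have lastpre: "pre \<noteq> [] \<Longrightarrow> y \<in> set_tree (Node l a r) \<Longrightarrow> last pre < y" for y
    using Node.prems(4) by auto
  have hdsuf: "suf \<noteq> [] \<Longrightarrow> y \<in> set_tree (Node l a r) \<Longrightarrow> y < hd suf" for y
    using Node.prems(5) by auto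
  have lastpre': "pre \<noteq> [] \<Longrightarrow> vs ! (length pre - 1) = last pre"
    using Node.prems(3) by (simp add: nth_append last_conv_nth)
  have depth_a: "depth_of T a = length pfx"
    using Node.prems(7) by (simp add: depth_of_def)
  show ?case
  proof (cases "x = a")
    case True then show ?thesis by simp
  next
    case xna: False
    show ?thesis
    proof (cases "x < a")
      case xlt: True
      obtain ks ss where ps: "path_split l x = (ks, ss)" by fastforce
      have vsE: "vs = pre @ ks @ a # suf" using Node.prems(3) xlt xna ps by simp
      have ksl: "set ks \<subseteq> set_tree l" using path_split_set[of l x] ps by simp
      have xl: "x \<in> set_tree l" using Node.prems(2) xlt xna sr by auto
      define i where "i = length pre + length ks"
      have vsa: "vs ! i = a" "i < length vs" unfolding i_def vsE by (auto simp: nth_append)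
      have idxa: "idx vs a = i" using idx_nth[OF distv vsa(2)] vsa by simp
      have vsk: "j < length ks \<Longrightarrow> vs ! (length pre + j) = ks ! j" for j
        unfolding vsE by (simp add: nth_append)
      have lenv: "length vs = Suc (i + length suf)" unfolding i_def vsE by simp
      have vssuf: "suf \<noteq> [] \<Longrightarrow> vs ! Suc i = hd suf" unfolding i_def vsE
        by (simp add: nth_append hd_conv_nth)
      have in_r: "in_window vs i z" if z: "z \<in> set_tree r" for z
      proof -
        have az: "a < z" using sr z by auto
        have lo: "i = 0 \<or> vs ! (i - 1) < z"
        proof (cases "ks = []")
          case True
          then show ?thesis using lastpre'[symmetric] lastpre[of z] z unfolding i_def
            by (cases "pre = []") auto
        next
          case False
          have "vs ! (i - 1) = ks ! (length ks - 1)"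
            using vsk[of "length ks - 1"] False unfolding i_def
            by (metis add_diff_assoc diff_less length_greater_0_conv less_one linorder_not_le not_gr_zero)
          moreover have "ks ! (length ks - 1) \<in> set_tree l" using False ksl by auto
          ultimately show ?thesis using sl az by fastforce
        qed
        have hi: "length vs \<le> Suc i \<or> z < vs ! Suc i"
          using vssuf hdsuf[of z] z lenv by (cases "suf = []") auto
        show ?thesis unfolding in_window_def using lo hi by blast
      qed
      have in_l: "y \<in> set_tree l" if j: "j < length ks" and y: "y \<in> set_tree T"
        and w: "in_window vs (length pre + j) y" for j y
      proof -
        have up: "y < vs ! Suc (length pre + j)"
          using w lenv j unfolding in_window_def i_def by auto
        have ya: "y < a"
        proof (cases "Suc j < length ks")
          case True
          then have "vs ! Suc (length pre + j) = ks ! Suc j" using vsk[of "Suc j"] by simp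
          moreover have "ks ! Suc j \<in> set_tree l" using True ksl by auto
          ultimately show ?thesis using up sl by fastforce
        next
          case False
          then have "Suc (length pre + j) = i" using j unfolding i_def by simp
          then show ?thesis using up vsa by simp
        qed
        have lo: "pre = [] \<or> last pre < y"
        proof (cases "pre = []")
          case False
          show ?thesis
          proof (cases j)
            case 0
            then show ?thesis using w False lastpre' unfolding in_window_def by auto
          next
            case (Suc j')
            then have "vs ! (length pre + j - 1) = ks ! j'" using vsk[of j'] j by simp
            moreover have "ks ! j' \<in> set_tree l" using Suc j ksl by auto
            moreover have "vs ! (length pre + j - 1) < y" using w Suc unfolding in_window_def by auto
            ultimately show ?thesis using lastpre[OF False, of "ks ! j'"] by auto
          qed
        qed simp
        have hs: "suf = [] \<or> y < hd suf"
        proof (cases "suf = []")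
          case False then have "a < hd suf" using hdsuf[of a] by simp
          then show ?thesis using ya by simp
        qed simp
        have "y \<in> set_tree (Node l a r)" using Node.prems(6) y lo hs by blast
        then show ?thesis using ya sr by auto
      qed
      have pa: "P a < P v" if v: "v \<in> set ks" for v
      proof -
        obtain j where j: "j < length ks" "v = ks ! j" using v by (metis in_set_conv_nth)
        have idxv: "idx vs v = length pre + j"
          using idx_nth[OF distv, of "length pre + j"] vsk[OF j(1)] j lenv unfolding i_def by simp
        have tle: "tau fut vs i \<le> tau fut vs (length pre + j)"
        proof (rule tau_le)
          fix s assume s: "s < length fut" "in_window vs (length pre + j) (fut ! s)"
          have "fut ! s \<in> set_tree T" using fsub s(1) by auto
          then have "fut ! s \<in> set_tree l" using in_l[OF j(1) _ s(2)] by simp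
          then obtain s' where "s' < s" "fut ! s' \<in> set_tree r"
            using alt Node.prems(1) xl s(1) unfolding Alt_def by blast
          then show "\<exists>s'<s. in_window vs i (fut ! s')" using in_r by blast
        qed
        have vl: "v \<in> set_tree l" using v ksl by auto
        have "search_path T v = pfx @ a # search_path l v"
          using Node.prems(7) vl sl by auto
        then have "depth_of T v > length pfx"
          using search_path_ne[OF vl] by (simp add: depth_of_def)
        then show ?thesis unfolding P_def using idxa idxv tle depth_a by (simp add: prio_less)
      qed
      have hl: "heapP P l x"
      proof (rule Node.IH(1)[of pre "a # suf" "pfx @ [a]"])
        show "l \<in> subtrees T" by (rule subl)
        show "x \<in> set_tree l" by (rule xl)
        show "vs = pre @ fst (path_split l x) @ a # suf" using vsE ps by simp
        show "\<forall>p\<in>set pre. \<forall>y\<in>set_tree l. p < y" using Node.prems(4) by auto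
        show "\<forall>q\<in>set (a # suf). \<forall>y\<in>set_tree l. y < q" using Node.prems(5) sl by auto
        show "\<forall>y\<in>set_tree T. (pre = [] \<or> last pre < y) \<and> (a # suf = [] \<or> y < hd (a # suf)) \<longrightarrow> y \<in> set_tree l"
        proof (intro ballI impI)
          fix y assume y: "y \<in> set_tree T" "(pre = [] \<or> last pre < y) \<and> (a # suf = [] \<or> y < hd (a # suf))"
          then have ya: "y < a" by simp
          have "suf = [] \<or> y < hd suf"
          proof (cases "suf = []")
            case False then have "a < hd suf" using hdsuf[of a] by simp
            then show ?thesis using ya by simp
          qed simp
          then have "y \<in> set_tree (Node l a r)" using Node.prems(6) y by blast
          then show "y \<in> set_tree l" using ya sr by auto
        qed
        show "\<forall>v\<in>set_tree l. search_path T v = (pfx @ [a]) @ search_path l v"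
          using Node.prems(7) sl by auto
      qed
      show ?thesis using xlt xna ps pa hl by simp
    next
      case xgt: False
      then have xgt': "a < x" using xna by simp
      obtain ks ss where ps: "path_split r x = (ks, ss)" by fastforce
      have vsE: "vs = pre @ a # ks @ suf" using Node.prems(3) xgt xna ps by simp
      have ksr: "set ks \<subseteq> set_tree r" using path_split_set[of r x] ps by simp
      have xr: "x \<in> set_tree r" using Node.prems(2) xgt' sl by auto
      define i where "i = length pre"
      have vsa: "vs ! i = a" "i < length vs" unfolding i_def vsE by (auto simp: nth_append)
      have idxa: "idx vs a = i" using idx_nth[OF distv vsa(2)] vsa by simp
      have vsk: "j < length ks \<Longrightarrow> vs ! (Suc i + j) = ks ! j" for j
        unfolding vsE i_def by (simp add: nth_append)
      have lenv: "length vs = Suc (i + length ks + length suf)" unfolding i_def vsE by simp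
      have vssuf: "suf \<noteq> [] \<Longrightarrow> vs ! (Suc i + length ks) = hd suf" unfolding i_def vsE
        by (simp add: nth_append hd_conv_nth)
      have in_l: "in_window vs i z" if z: "z \<in> set_tree l" for z
      proof -
        have az: "z < a" using sl z by auto
        have lo: "i = 0 \<or> vs ! (i - 1) < z"
          using lastpre'[symmetric] lastpre[of z] z unfolding i_def
          by (cases "pre = []") auto
        have hi: "length vs \<le> Suc i \<or> z < vs ! Suc i"
        proof (cases "ks = []")
          case True
          then show ?thesis using vssuf hdsuf[of z] z lenv by (cases "suf = []") auto
        next
          case False
          then have "vs ! Suc i = ks ! 0" using vsk[of 0] by simp
          moreover have "ks ! 0 \<in> set_tree r" using False ksr by auto
          ultimately show ?thesis using sr az by fastforce
        qed
        show ?thesis unfolding in_window_def using lo hi by blast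
      qed
      have in_r: "y \<in> set_tree r" if j: "j < length ks" and y: "y \<in> set_tree T"
        and w: "in_window vs (Suc i + j) y" for j y
      proof -
        have low: "vs ! (i + j) < y" using w unfolding in_window_def by auto
        have ay: "a < y"
        proof (cases j)
          case 0 then show ?thesis using low vsa by simp
        next
          case (Suc j')
          then have "vs ! (i + j) = ks ! j'" using vsk[of j'] j by simp
          moreover have "ks ! j' \<in> set_tree r" using Suc j ksr by auto
          ultimately show ?thesis using low sr by fastforce
        qed
        have lo: "pre = [] \<or> last pre < y"
        proof (cases "pre = []")
          case False then have "last pre < a" using lastpre[of a] by simp
          then show ?thesis using ay by simp
        qed simp
        have hs: "suf = [] \<or> y < hd suf"
        proof (cases "suf = []")
          case False
          have "length suf > 0" using False by simp
          then have "\<not> length vs \<le> Suc (Suc i + j)" using lenv j by linarith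
          then have up: "y < vs ! Suc (Suc i + j)" using w unfolding in_window_def by blast
          show ?thesis
          proof (cases "Suc j < length ks")
            case True
            then have "vs ! Suc (Suc i + j) = ks ! Suc j" using vsk[of "Suc j"] by simp
            moreover have "ks ! Suc j \<in> set_tree r" using True ksr by auto
            ultimately show ?thesis using up hdsuf[OF False, of "ks ! Suc j"] by auto
          next
            case False
            then have "Suc (Suc i + j) = Suc i + length ks" using j by simp
            then show ?thesis using up vssuf \<open>suf \<noteq> []\<close> by (metis add_Suc)
          qed
        qed simp
        have "y \<in> set_tree (Node l a r)" using Node.prems(6) y lo hs by blast
        then show ?thesis using ay sl by auto
      qed
      have pa: "P a < P v" if v: "v \<in> set ks" for v
      proof -
        obtain j where j: "j < length ks" "v = ks ! j" using v by (metis in_set_conv_nth)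
        have idxv: "idx vs v = Suc i + j"
          using idx_nth[OF distv, of "Suc i + j"] vsk[OF j(1)] j lenv by simp
        have tle: "tau fut vs i \<le> tau fut vs (Suc i + j)"
        proof (rule tau_le)
          fix s assume s: "s < length fut" "in_window vs (Suc i + j) (fut ! s)"
          have "fut ! s \<in> set_tree T" using fsub s(1) by auto
          then have "fut ! s \<in> set_tree r" using in_r[OF j(1) _ s(2)] by simp
          then obtain s' where "s' < s" "fut ! s' \<in> set_tree l"
            using alt Node.prems(1) xr s(1) unfolding Alt_def by blast
          then show "\<exists>s'<s. in_window vs i (fut ! s')" using in_l by blast
        qed
        have vr: "v \<in> set_tree r" using v ksr by auto
        have "search_path T v = pfx @ a # search_path r v"
          using Node.prems(7) vr sr by auto
        then have "depth_of T v > length pfx"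
          using search_path_ne[OF vr] by (simp add: depth_of_def)
        then show ?thesis unfolding P_def using idxa idxv tle depth_a by (simp add: prio_less)
      qed
      have hr: "heapP P r x"
      proof (rule Node.IH(2)[of "pre @ [a]" suf "pfx @ [a]"])
        show "r \<in> subtrees T" by (rule subr)
        show "x \<in> set_tree r" by (rule xr)
        show "vs = (pre @ [a]) @ fst (path_split r x) @ suf" using vsE ps by simp
        show "\<forall>p\<in>set (pre @ [a]). \<forall>y\<in>set_tree r. p < y" using Node.prems(4) sr by auto
        show "\<forall>q\<in>set suf. \<forall>y\<in>set_tree r. y < q" using Node.prems(5) by auto
        show "\<forall>y\<in>set_tree T. (pre @ [a] = [] \<or> last (pre @ [a]) < y) \<and> (suf = [] \<or> y < hd suf) \<longrightarrow> y \<in> set_tree r"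
        proof (intro ballI impI)
          fix y assume y: "y \<in> set_tree T" "(pre @ [a] = [] \<or> last (pre @ [a]) < y) \<and> (suf = [] \<or> y < hd suf)"
          then have ay: "a < y" by simp
          have "pre = [] \<or> last pre < y"
        proof (cases "pre = []")
          case False then have "last pre < a" using lastpre[of a] by simp
          then show ?thesis using ay by simp
        qed simp
          then have "y \<in> set_tree (Node l a r)" using Node.prems(6) y by blast
          then show "y \<in> set_tree r" using ay sl by auto
        qed
        show "\<forall>v\<in>set_tree r. search_path T v = (pfx @ [a]) @ search_path r v"
          using Node.prems(7) sr by auto
      qed
      show ?thesis using xgt xna ps pa hr by simp
    qed
  qed
qed



lemma vps_eq: "distinct vs \<Longrightarrow>
  map (\<lambda>i. (vs ! i, Q i)) [0..<length vs] = map (\<lambda>v. (v, Q (idx vs v))) vs"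
proof -
  assume d: "distinct vs"
  have "map (\<lambda>v. (v, Q (idx vs v))) vs = map (\<lambda>v. (v, Q (idx vs v))) (map (\<lambda>i. vs ! i) [0..<length vs])"
    by (simp add: map_nth)
  also have "\<dots> = map (\<lambda>i. (vs ! i, Q i)) [0..<length vs]"
    using idx_nth[OF d] by auto
  finally show ?thesis by simp
qed

lemma gf_fix:
  assumes bst: "bst T" and x: "x \<in> set_tree T" and fsub: "set fut \<subseteq> set_tree T" and alt: "Alt T x fut"
  shows "gf_step T x fut = T"
proof -
  define vs where "vs = fst (path_split T x)"
  define ss where "ss = snd (path_split T x)"
  define P where "P = (\<lambda>v. (tau fut vs (idx vs v), depth_of T v))"
  have d: "distinct vs" unfolding vs_def by (rule sorted_less_distinct[OF path_split_sorted[OF bst]])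
  have h: "heapP P T x"
    using heap_main[OF bst fsub alt, of T "[]" "[]" "[]"] self_sub[of T] x
    unfolding P_def vs_def by simp
  have "gf_step T x fut = build (length vs) (map (\<lambda>i. (vs ! i, (tau fut vs i, depth_of T (vs ! i)))) [0..<length vs]) ss"
    unfolding gf_step_def vs_def ss_def by (simp split: prod.splits)
  also have "map (\<lambda>i. (vs ! i, (tau fut vs i, depth_of T (vs ! i)))) [0..<length vs] = map (\<lambda>v. (v, P v)) vs"
  proof -
    have e1: "map (\<lambda>i. (vs ! i, (tau fut vs i, depth_of T (vs ! i)))) [0..<length vs] = map (\<lambda>v. (v, (tau fut vs (idx vs v), depth_of T (vs ! idx vs v)))) vs"
      using vps_eq[OF d, of "\<lambda>i. (tau fut vs i, depth_of T (vs ! i))"] by simp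
    have e2: "map (\<lambda>v. (v, (tau fut vs (idx vs v), depth_of T (vs ! idx vs v)))) vs = map (\<lambda>v. (v, P v)) vs"
    proof (rule map_cong[OF refl])
      fix v assume "v \<in> set vs"
      then obtain i where "i < length vs" "v = vs ! i" by (metis in_set_conv_nth)
      then show "(v, (tau fut vs (idx vs v), depth_of T (vs ! idx vs v))) = (v, P v)"
        using idx_nth[OF d] unfolding P_def by simp
    qed
    show ?thesis using e1 e2 by simp
  qed
  also have "build (length vs) (map (\<lambda>v. (v, P v)) vs) ss = T"
    using build_path[OF h, of "length vs"] unfolding vs_def ss_def by simp
  finally show ?thesis .
qed

lemma hd_filter_nth: "s < length ws \<Longrightarrow> Q (ws ! s) \<Longrightarrow>
   \<exists>s'\<le>s. s' < length ws \<and> filter Q ws = ws ! s' # filter Q (drop (Suc s') ws)"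
proof (induction ws arbitrary: s)
  case Nil then show ?case by simp
next
  case (Cons w ws)
  show ?case
  proof (cases "Q w")
    case True then show ?thesis by (intro exI[of _ 0]) auto
  next
    case False
    then obtain s0 where s: "s = Suc s0" using Cons.prems by (cases s) auto
    obtain s' where "s' \<le> s0" "s' < length ws" "filter Q ws = ws ! s' # filter Q (drop (Suc s') ws)"
      using Cons.IH[of s0] Cons.prems s by auto
    then show ?thesis using False s by (intro exI[of _ "Suc s'"]) auto
  qed
qed

lemma alt_step:
  assumes alt: "alternates l r (filter Q (us @ x # ws))"
    and Q: "\<And>z. z \<in> set_tree l \<Longrightarrow> Q z" "\<And>z. z \<in> set_tree r \<Longrightarrow> Q z"
    and disj: "set_tree l \<inter> set_tree r = {}"
    and x: "x \<in> set_tree l" and s: "s < length ws" "ws ! s \<in> set_tree l"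
  shows "\<exists>s'<s. ws ! s' \<in> set_tree r"
proof -
  obtain s' where s': "s' \<le> s" "s' < length ws" "filter Q ws = ws ! s' # filter Q (drop (Suc s') ws)"
    using hd_filter_nth[of s ws Q] s Q(1) by auto
  have Qx: "Q x" using Q(1) x .
  let ?F = "filter Q (us @ x # ws)"
  have F: "?F = filter Q us @ x # ws ! s' # filter Q (drop (Suc s') ws)" using Qx s' by simp
  define p where "p = length (filter Q us)"
  have "?F ! p = x" "?F ! Suc p = ws ! s'" "Suc p < length ?F" unfolding F p_def by (auto simp: nth_append)
  then have "(x \<in> set_tree l \<and> ws ! s' \<in> set_tree r) \<or> (x \<in> set_tree r \<and> ws ! s' \<in> set_tree l)"
    using alt unfolding alternates_def by metis
  then have r: "ws ! s' \<in> set_tree r" using x disj by auto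
  then have "s' \<noteq> s" using s disj by auto
  then show ?thesis using s' r by (intro exI[of _ s']) auto
qed



lemma stable_Alt:
  assumes bst: "bst T" and st: "strongly_stable T (us @ x # ws)"
  shows "Alt T x ws"
proof -
  have "(x \<in> set_tree l \<longrightarrow> (\<forall>s<length ws. ws ! s \<in> set_tree l \<longrightarrow> (\<exists>s'<s. ws ! s' \<in> set_tree r))) \<and>
     (x \<in> set_tree r \<longrightarrow> (\<forall>s<length ws. ws ! s \<in> set_tree r \<longrightarrow> (\<exists>s'<s. ws ! s' \<in> set_tree l)))"
    if sub: "Node l a r \<in> subtrees T" for l a r
  proof -
    have bs: "bst (Node l a r)" using bst_subtree[OF bst sub] .
    have disj: "set_tree l \<inter> set_tree r = {}" using bs by (simp add: disjoint_iff) (meson less_asym)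
    let ?Q = "\<lambda>z. z \<in> set_tree (Node l a r)"
    have A: "\<forall>s<length ws. ws ! s \<in> set_tree l \<longrightarrow> (\<exists>s'<s. ws ! s' \<in> set_tree r)"
      if x: "x \<in> set_tree l"
    proof -
      have "l \<noteq> Leaf" using x by auto
      then have alt: "alternates l r (filter ?Q (us @ x # ws))" using st sub unfolding strongly_stable_def by blast
      show ?thesis using alt_step[OF alt _ _ disj x] by auto
    qed
    have B: "\<forall>s<length ws. ws ! s \<in> set_tree r \<longrightarrow> (\<exists>s'<s. ws ! s' \<in> set_tree l)"
      if x: "x \<in> set_tree r"
    proof -
      have "r \<noteq> Leaf" using x by auto
      then have alt: "alternates l r (filter ?Q (us @ x # ws))" using st sub unfolding strongly_stable_def by blast
      then have alt': "alternates r l (filter ?Q (us @ x # ws))" unfolding alternates_def by blast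
      have disj': "set_tree r \<inter> set_tree l = {}" using disj by auto
      show ?thesis using alt_step[OF alt' _ _ disj' x] by auto
    qed
    show ?thesis using A B by blast
  qed
  then show ?thesis unfolding Alt_def by blast
qed

lemma leaf_keys_sub: "leaf_keys T \<subseteq> set_tree T"
  unfolding leaf_keys_def using in_set_tree_if by fastforce

lemma gf_total_static:
  assumes bst: "bst T" and st: "strongly_stable T (us @ ws)"
  shows "gf_total T ws = sum_list (map (\<lambda>x. length (search_path T x)) ws)"
  using st
proof (induction ws arbitrary: us)
  case Nil then show ?case by simp
next
  case (Cons x ws)
  have sub: "set (us @ x # ws) \<subseteq> set_tree T"
    using Cons.prems leaf_keys_sub unfolding strongly_stable_def by blast
  have "gf_step T x ws = T"
    by (rule gf_fix[OF bst]) (use sub stable_Alt[OF bst Cons.prems] in auto)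
  moreover have "gf_total T ws = sum_list (map (\<lambda>x. length (search_path T x)) ws)"
    using Cons.IH[of "us @ [x]"] Cons.prems by simp
  moreover have "card (set (search_path T x)) = length (search_path T x)"
    by (rule distinct_card[OF search_path_distinct[OF bst]])
  ultimately show ?case by simp
qed



definition fcost :: "nat tree \<Rightarrow> nat list \<Rightarrow> nat" where
  "fcost T X = sum_list (map (\<lambda>x. length (search_path T x)) X)"

definition good :: "nat tree \<Rightarrow> nat list \<Rightarrow> bool" where
  "good T X \<longleftrightarrow> set X \<subseteq> set_tree T \<and>
     (\<forall>l a r. Node l a r \<in> subtrees T \<and> (l \<noteq> Leaf \<or> r \<noteq> Leaf) \<longrightarrow>
        a \<notin> set X \<and> length (filter (\<lambda>x. x \<in> set_tree l) X) = length (filter (\<lambda>x. x \<in> set_tree r) X))"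

lemma alternates_Cons:
  assumes "alternates l r (z # Z)"
  shows "alternates l r Z" "Z \<noteq> [] \<Longrightarrow> (z \<in> set_tree l \<and> hd Z \<in> set_tree r) \<or> (z \<in> set_tree r \<and> hd Z \<in> set_tree l)"
proof -
  show "alternates l r Z" using assms unfolding alternates_def
    by (metis Suc_less_eq length_Cons nth_Cons_Suc)
next
  assume "Z \<noteq> []"
  then show "(z \<in> set_tree l \<and> hd Z \<in> set_tree r) \<or> (z \<in> set_tree r \<and> hd Z \<in> set_tree l)"
    using assms unfolding alternates_def
    by (metis hd_conv_nth length_Cons length_greater_0_conv nat.simps(3) nth_Cons_0 nth_Cons_Suc zero_less_Suc Suc_less_eq)
qed

lemma alt_count:
  assumes "alternates l r Z" "set_tree l \<inter> set_tree r = {}" "set Z \<subseteq> set_tree l \<union> set_tree r"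
  shows "(Z \<noteq> [] \<and> hd Z \<in> set_tree l \<longrightarrow>
           length (filter (\<lambda>x. x \<in> set_tree r) Z) \<le> length (filter (\<lambda>x. x \<in> set_tree l) Z) \<and>
           length (filter (\<lambda>x. x \<in> set_tree l) Z) \<le> Suc (length (filter (\<lambda>x. x \<in> set_tree r) Z))) \<and>
         (Z \<noteq> [] \<and> hd Z \<in> set_tree r \<longrightarrow>
           length (filter (\<lambda>x. x \<in> set_tree l) Z) \<le> length (filter (\<lambda>x. x \<in> set_tree r) Z) \<and>
           length (filter (\<lambda>x. x \<in> set_tree r) Z) \<le> Suc (length (filter (\<lambda>x. x \<in> set_tree l) Z)))"
  using assms
proof (induction Z)
  case Nil then show ?case by simp
next
  case (Cons z Z)
  have a1: "alternates l r Z" using alternates_Cons(1)[OF Cons.prems(1)] .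
  have IH: "(Z \<noteq> [] \<and> hd Z \<in> set_tree l \<longrightarrow>
           length (filter (\<lambda>x. x \<in> set_tree r) Z) \<le> length (filter (\<lambda>x. x \<in> set_tree l) Z) \<and>
           length (filter (\<lambda>x. x \<in> set_tree l) Z) \<le> Suc (length (filter (\<lambda>x. x \<in> set_tree r) Z))) \<and>
         (Z \<noteq> [] \<and> hd Z \<in> set_tree r \<longrightarrow>
           length (filter (\<lambda>x. x \<in> set_tree l) Z) \<le> length (filter (\<lambda>x. x \<in> set_tree r) Z) \<and>
           length (filter (\<lambda>x. x \<in> set_tree r) Z) \<le> Suc (length (filter (\<lambda>x. x \<in> set_tree l) Z)))"
    using Cons.IH[OF a1 Cons.prems(2)] Cons.prems(3) by simp
  have zlr: "z \<in> set_tree l \<or> z \<in> set_tree r" using Cons.prems(3) by auto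
  show ?case
  proof (cases "Z = []")
    case True then show ?thesis using Cons.prems(2) zlr by auto
  next
    case False
    have sides: "(z \<in> set_tree l \<and> hd Z \<in> set_tree r) \<or> (z \<in> set_tree r \<and> hd Z \<in> set_tree l)"
      using alternates_Cons(2)[OF Cons.prems(1) False] .
    then show ?thesis using IH False Cons.prems(2) by auto
  qed
qed

lemma alt_in:
  assumes "alternates l r Z" "2 \<le> length Z"
  shows "set Z \<subseteq> set_tree l \<union> set_tree r"
proof
  fix z assume "z \<in> set Z"
  then obtain i where i: "i < length Z" "Z ! i = z" by (metis in_set_conv_nth)
  show "z \<in> set_tree l \<union> set_tree r"
  proof (cases "Suc i < length Z")
    case True then show ?thesis using assms(1) i unfolding alternates_def by blast
  next
    case False
    then have "i = Suc (i - 1)" "Suc (i - 1) < length Z" using assms(2) i by auto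
    then show ?thesis using assms(1) i unfolding alternates_def by (metis Un_iff)
  qed
qed

lemma good_from_stable:
  assumes bst: "bst T" and st: "strongly_stable T (X @ X)"
  shows "good T X"
  unfolding good_def
proof (rule conjI)
  show "set X \<subseteq> set_tree T" using st leaf_keys_sub unfolding strongly_stable_def by auto
next
  show "\<forall>l a r. Node l a r \<in> subtrees T \<and> (l \<noteq> Leaf \<or> r \<noteq> Leaf) \<longrightarrow>
        a \<notin> set X \<and> length (filter (\<lambda>x. x \<in> set_tree l) X) = length (filter (\<lambda>x. x \<in> set_tree r) X)"
  proof (intro allI impI)
  fix l a r assume H: "Node l a r \<in> subtrees T \<and> (l \<noteq> Leaf \<or> r \<noteq> Leaf)"
  have bs: "bst (Node l a r)" using bst_subtree[OF bst] H by blast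
  have disj: "set_tree l \<inter> set_tree r = {}" using bs by (simp add: disjoint_iff) (meson less_asym)
  have anot: "a \<notin> set_tree l \<union> set_tree r" using bs by auto
  define Q where "Q = (\<lambda>z. z \<in> set_tree (Node l a r))"
  define Y where "Y = filter Q X"
  have alt: "alternates l r (Y @ Y)" using st H unfolding strongly_stable_def Y_def Q_def by auto
  have fl: "filter (\<lambda>x. x \<in> set_tree l) Y = filter (\<lambda>x. x \<in> set_tree l) X"
    unfolding Y_def Q_def filter_filter by (rule filter_cong) auto
  have fr: "filter (\<lambda>x. x \<in> set_tree r) Y = filter (\<lambda>x. x \<in> set_tree r) X"
    unfolding Y_def Q_def filter_filter by (rule filter_cong) auto
  show "a \<notin> set X \<and> length (filter (\<lambda>x. x \<in> set_tree l) X) = length (filter (\<lambda>x. x \<in> set_tree r) X)"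
  proof (cases "Y = []")
    case True
    then have "a \<notin> set X" unfolding Y_def Q_def by (auto simp: filter_empty_conv)
    moreover have "filter (\<lambda>x. x \<in> set_tree l) X = []" "filter (\<lambda>x. x \<in> set_tree r) X = []"
      using fl fr True by auto
    ultimately show ?thesis by simp
  next
    case False
    then have "2 \<le> length (Y @ Y)" by (cases Y) auto
    then have sub: "set (Y @ Y) \<subseteq> set_tree l \<union> set_tree r" using alt_in[OF alt] by blast
    then have "a \<notin> set Y" using anot by auto
    then have "a \<notin> set X" unfolding Y_def Q_def by auto
    moreover
    have c: "(Y @ Y \<noteq> [] \<and> hd (Y @ Y) \<in> set_tree l \<longrightarrow>
           length (filter (\<lambda>x. x \<in> set_tree r) (Y @ Y)) \<le> length (filter (\<lambda>x. x \<in> set_tree l) (Y @ Y)) \<and>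
           length (filter (\<lambda>x. x \<in> set_tree l) (Y @ Y)) \<le> Suc (length (filter (\<lambda>x. x \<in> set_tree r) (Y @ Y)))) \<and>
         (Y @ Y \<noteq> [] \<and> hd (Y @ Y) \<in> set_tree r \<longrightarrow>
           length (filter (\<lambda>x. x \<in> set_tree l) (Y @ Y)) \<le> length (filter (\<lambda>x. x \<in> set_tree r) (Y @ Y)) \<and>
           length (filter (\<lambda>x. x \<in> set_tree r) (Y @ Y)) \<le> Suc (length (filter (\<lambda>x. x \<in> set_tree l) (Y @ Y))))"
      by (rule alt_count[OF alt disj sub])
    have "hd (Y @ Y) \<in> set_tree l \<or> hd (Y @ Y) \<in> set_tree r" using sub False by (cases Y) auto
    then have "length (filter (\<lambda>x. x \<in> set_tree l) Y) = length (filter (\<lambda>x. x \<in> set_tree r) Y)"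
      using c False by auto
    ultimately show ?thesis using fl fr by simp
  qed
  qed
qed



lemma fcost_node:
  assumes bs: "bst (Node l a r)" and sub: "set X \<subseteq> set_tree (Node l a r)" and an: "a \<notin> set X"
  shows "fcost (Node l a r) X = length X + fcost l (filter (\<lambda>x. x \<in> set_tree l) X) + fcost r (filter (\<lambda>x. x \<in> set_tree r) X)
    \<and> length X = length (filter (\<lambda>x. x \<in> set_tree l) X) + length (filter (\<lambda>x. x \<in> set_tree r) X)"
  using sub an
proof (induction X)
  case Nil then show ?case by (simp add: fcost_def)
next
  case (Cons x X)
  have IH: "fcost (Node l a r) X = length X + fcost l (filter (\<lambda>x. x \<in> set_tree l) X) + fcost r (filter (\<lambda>x. x \<in> set_tree r) X)
    \<and> length X = length (filter (\<lambda>x. x \<in> set_tree l) X) + length (filter (\<lambda>x. x \<in> set_tree r) X)"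
    using Cons by auto
  have x: "x \<in> set_tree l \<or> x \<in> set_tree r" "x \<noteq> a" using Cons.prems by auto
  show ?case
  proof (cases "x \<in> set_tree l")
    case True
    have xa: "x < a" using bs True by auto
    then have "x \<notin> set_tree r" using bs by auto
    note this xa
    then show ?thesis using IH True x by (simp add: fcost_def)
  next
    case False
    then have "a < x" "x \<in> set_tree r" using bs x by auto
    then show ?thesis using IH False x by (simp add: fcost_def)
  qed
qed

lemma good_sub:
  assumes bs: "bst (Node l a r)" and g: "good (Node l a r) X"
  shows "good l (filter (\<lambda>x. x \<in> set_tree l) X)" "good r (filter (\<lambda>x. x \<in> set_tree r) X)"
proof -
  have fl: "filter (\<lambda>x. x \<in> set_tree l') (filter (\<lambda>x. x \<in> set_tree t) X) = filter (\<lambda>x. x \<in> set_tree l') X"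
    if "Node l' b r' \<in> subtrees t" for l' b r' t
    unfolding filter_filter
    using set_tree_subtree[OF that] by (intro filter_cong) auto
  have fr: "filter (\<lambda>x. x \<in> set_tree r') (filter (\<lambda>x. x \<in> set_tree t) X) = filter (\<lambda>x. x \<in> set_tree r') X"
    if "Node l' b r' \<in> subtrees t" for l' b r' t
    unfolding filter_filter
    using set_tree_subtree[OF that] by (intro filter_cong) auto
  show "good l (filter (\<lambda>x. x \<in> set_tree l) X)" unfolding good_def
  proof (intro conjI allI impI)
    show "set (filter (\<lambda>x. x \<in> set_tree l) X) \<subseteq> set_tree l" by auto
  next
    fix l' b r' assume H: "Node l' b r' \<in> subtrees l \<and> (l' \<noteq> Leaf \<or> r' \<noteq> Leaf)"
    then have H2: "Node l' b r' \<in> subtrees (Node l a r)" by auto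
    show "b \<notin> set (filter (\<lambda>x. x \<in> set_tree l) X)" using g H2 H unfolding good_def by auto
    show "length (filter (\<lambda>x. x \<in> set_tree l') (filter (\<lambda>x. x \<in> set_tree l) X)) =
      length (filter (\<lambda>x. x \<in> set_tree r') (filter (\<lambda>x. x \<in> set_tree l) X))"
      using fl[of l' b r' l] fr[of l' b r' l] H g H2 unfolding good_def by presburger
  qed
  show "good r (filter (\<lambda>x. x \<in> set_tree r) X)" unfolding good_def
  proof (intro conjI allI impI)
    show "set (filter (\<lambda>x. x \<in> set_tree r) X) \<subseteq> set_tree r" by auto
  next
    fix l' b r' assume H: "Node l' b r' \<in> subtrees r \<and> (l' \<noteq> Leaf \<or> r' \<noteq> Leaf)"
    then have H2: "Node l' b r' \<in> subtrees (Node l a r)" by auto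
    show "b \<notin> set (filter (\<lambda>x. x \<in> set_tree r) X)" using g H2 H unfolding good_def by auto
    show "length (filter (\<lambda>x. x \<in> set_tree l') (filter (\<lambda>x. x \<in> set_tree r) X)) =
      length (filter (\<lambda>x. x \<in> set_tree r') (filter (\<lambda>x. x \<in> set_tree r) X))"
      using fl[of l' b r' r] fr[of l' b r' r] H g H2 unfolding good_def by presburger
  qed
qed

lemma split_node:
  assumes bs: "bst (Node l a r)" and g: "good (Node l a r) X" and ne: "l \<noteq> Leaf \<or> r \<noteq> Leaf"
  shows "real (fcost (Node l a r) X) = real (length X) + real (fcost l (filter (\<lambda>x. x \<in> set_tree l) X)) + real (fcost r (filter (\<lambda>x. x \<in> set_tree r) X))"
    "real (length (filter (\<lambda>x. x \<in> set_tree l) X)) = real (length X) / 2"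
    "real (length (filter (\<lambda>x. x \<in> set_tree r) X)) = real (length X) / 2"
proof -
  have sub: "set X \<subseteq> set_tree (Node l a r)" and an: "a \<notin> set X"
    and eq: "length (filter (\<lambda>x. x \<in> set_tree l) X) = length (filter (\<lambda>x. x \<in> set_tree r) X)"
    using g ne self_sub[of "Node l a r"] unfolding good_def by blast+
  note fn = fcost_node[OF bs sub an]
  show "real (fcost (Node l a r) X) = real (length X) + real (fcost l (filter (\<lambda>x. x \<in> set_tree l) X)) + real (fcost r (filter (\<lambda>x. x \<in> set_tree r) X))"
    using fn by simp
  show "real (length (filter (\<lambda>x. x \<in> set_tree l) X)) = real (length X) / 2"
    using fn eq by simp
  show "real (length (filter (\<lambda>x. x \<in> set_tree r) X)) = real (length X) / 2"
    using fn eq by simp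
qed

lemma label_inorder: "inorder (fst (label S n)) = [n..<snd (label S n)] \<and> n \<le> snd (label S n)"
proof (induction S arbitrary: n)
  case Leaf then show ?case by simp
next
  case (Node l u r)
  obtain l' n1 where L: "label l n = (l', n1)" by fastforce
  obtain r' n2 where R: "label r (Suc n1) = (r', n2)" by fastforce
  have "inorder l' = [n..<n1]" "n \<le> n1" using Node.IH(1)[of n] L by auto
  moreover have "inorder r' = [Suc n1..<n2]" "Suc n1 \<le> n2" using Node.IH(2)[of "Suc n1"] R by auto
  moreover have "[n..<n1] @ n1 # [Suc n1..<n2] = [n..<n2]"
    using calculation upt_add_eq_append[of n n1 "n2 - n1"] upt_conv_Cons[of n1 n2] by simp
  ultimately show ?case using L R by simp
qed

lemma label_bst: "bst (fst (label S n))"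
  using label_inorder[of S n] by (simp add: bst_iff_sorted_wrt_less)

lemma label_Node: "fst (label (Node l u r) n) =
   Node (fst (label l n)) (snd (label l n)) (fst (label r (Suc (snd (label l n)))))"
  by (simp split: prod.splits)

lemma label_not_Leaf: "S \<noteq> Leaf \<Longrightarrow> fst (label S n) \<noteq> Leaf"
  by (cases S) (simp_all split: prod.splits)

lemma leaf_case:
  assumes "good (Node Leaf n Leaf) X"
  shows "real (fcost (Node Leaf n Leaf) X) = real (length X)"
proof -
  have "set X \<subseteq> {n}" using assms unfolding good_def by auto
  then have "fcost (Node Leaf n Leaf) X = length X"
    unfolding fcost_def by (induction X) auto
  then show ?thesis by simp
qed

lemma chain_cost:
  assumes K: "\<And>n X. good (fst (label S n)) X \<Longrightarrow> real (fcost (fst (label S n)) X) = real (length X) * c"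
  shows "good (fst (label (chain S m) n)) X \<Longrightarrow>
    real (fcost (fst (label (chain S m) n)) X) = real (length X) * ((2 - 1 / 2 ^ m) + (1 - 1 / 2 ^ m) * c)"
proof (induction m arbitrary: n X)
  case 0
  then show ?case using leaf_case[of n X] by simp
next
  case (Suc m)
  define L where "L = fst (label (chain S m) n)"
  define a where "a = snd (label (chain S m) n)"
  define R where "R = fst (label S (Suc a))"
  have T: "fst (label (chain S (Suc m)) n) = Node L a R"
    unfolding L_def a_def R_def by (simp add: label_Node[simplified])
  have Ln: "L \<noteq> Leaf" unfolding L_def by (rule label_not_Leaf) (cases m; simp)
  have bs: "bst (Node L a R)" using label_bst T by metis
  have g: "good (Node L a R) X" using Suc.prems T by simp
  note sp = split_node[OF bs g] Ln
  have gl: "good L (filter (\<lambda>x. x \<in> set_tree L) X)" and gr: "good R (filter (\<lambda>x. x \<in> set_tree R) X)"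
    using good_sub[OF bs g] by auto
  have cl: "real (fcost L (filter (\<lambda>x. x \<in> set_tree L) X)) = real (length X) / 2 * ((2 - 1 / 2 ^ m) + (1 - 1 / 2 ^ m) * c)"
    using Suc.IH[of n "filter (\<lambda>x. x \<in> set_tree L) X"] gl sp unfolding L_def by simp
  have cr: "real (fcost R (filter (\<lambda>x. x \<in> set_tree R) X)) = real (length X) / 2 * c"
    using K[of "Suc a" "filter (\<lambda>x. x \<in> set_tree R) X"] gr sp unfolding R_def by simp
  show ?case unfolding T using sp cl cr by (simp add: field_simps)
qed



fun crec :: "nat \<Rightarrow> nat \<Rightarrow> real" where
  "crec k 0 = 1"
| "crec k (Suc r) = (2 - 1 / 2 ^ k) + (1 - 1 / 2 ^ k) * crec k r"

lemma kr_shape_not_Leaf: "kr_shape k r \<noteq> Leaf"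
  by (cases r) auto

lemma kr_cost:
  assumes k: "k \<ge> 1"
  shows "good (fst (label (kr_shape k r) n)) X \<Longrightarrow>
    real (fcost (fst (label (kr_shape k r) n)) X) = real (length X) * crec k r"
proof (induction r arbitrary: n X)
  case 0
  then show ?case using leaf_case[of n X] by simp
next
  case (Suc r)
  define S where "S = kr_shape k r"
  define A where "A = fst (label S n)"
  define a where "a = snd (label S n)"
  define C where "C = fst (label (chain S (k - 1)) (Suc a))"
  have T: "fst (label (kr_shape k (Suc r)) n) = Node A a C"
    unfolding A_def a_def C_def S_def by (simp add: label_Node[simplified])
  have An: "A \<noteq> Leaf" unfolding A_def S_def by (rule label_not_Leaf[OF kr_shape_not_Leaf])
  have bs: "bst (Node A a C)" using label_bst T by metis
  have g: "good (Node A a C) X" using Suc.prems T by simp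
  note sp = split_node[OF bs g] An
  have gl: "good A (filter (\<lambda>x. x \<in> set_tree A) X)" and gr: "good C (filter (\<lambda>x. x \<in> set_tree C) X)"
    using good_sub[OF bs g] by auto
  have cl: "real (fcost A (filter (\<lambda>x. x \<in> set_tree A) X)) = real (length X) / 2 * crec k r"
    using Suc.IH[of n "filter (\<lambda>x. x \<in> set_tree A) X"] gl sp unfolding A_def S_def by simp
  have cr: "real (fcost C (filter (\<lambda>x. x \<in> set_tree C) X)) = real (length X) / 2 * ((2 - 1 / 2 ^ (k - 1)) + (1 - 1 / 2 ^ (k - 1)) * crec k r)"
    using chain_cost[of S "crec k r" "k - 1" "Suc a" "filter (\<lambda>x. x \<in> set_tree C) X"] Suc.IH gl gr sp
    unfolding C_def S_def by simp
  obtain j where kj: "k = Suc j" using k by (cases k) auto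
  show ?case unfolding T using sp cl cr kj by (simp add: field_simps)
qed

lemma sum_pow: "(\<Sum>j = 1..k. real j / 2 ^ j) = 2 - (real k + 2) / 2 ^ k"
proof (induction k)
  case 0 then show ?case by simp
next
  case (Suc k)
  then show ?case by (simp add: field_simps)
qed

lemma crec_closed:
  fixes \<alpha> \<beta> :: real
  assumes "\<alpha> = 1 - 1 / 2 ^ k" "\<beta> = 2 - 1 / 2 ^ k"
  shows "crec k r = 2 ^ k * \<beta> * (1 - \<alpha> ^ r) + \<alpha> ^ r"
proof (induction r)
  case 0 then show ?case by simp
next
  case (Suc r)
  have "crec k (Suc r) = \<beta> + \<alpha> * crec k r" using assms by simp
  also have "\<dots> = \<beta> + \<alpha> * (2 ^ k * \<beta> * (1 - \<alpha> ^ r) + \<alpha> ^ r)" using Suc by simp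
  also have "\<dots> = 2 ^ k * \<beta> * (1 - \<alpha> ^ Suc r) + \<alpha> ^ Suc r"
  proof -
    have "(2::real) ^ k * (1 - \<alpha>) = 1" using assms(1) by simp
    then have "\<beta> = 2 ^ k * \<beta> * (1 - \<alpha>)" by simp
    then show ?thesis by (simp add: algebra_simps)
  qed
  finally show ?case .
qed


theorem lemma9:
  fixes k r :: nat and X :: "nat list" and \<alpha> \<beta> :: real
  assumes "k \<ge> 2"
    and "strongly_stable (kr_tree k r) X"
    and "whole_multiple_of_atomic (kr_tree k r) X"
    and "\<alpha> = 1 - 1 / 2 ^ k"
    and "\<beta> = (\<Sum>j = 1..k. real j / 2 ^ j) + real (k + 1) / 2 ^ k"
  shows "cost_hat_GF X (kr_tree k r) = 2 ^ k * \<beta> * (1 - \<alpha> ^ r) + \<alpha> ^ r"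
proof -
  define T where "T = kr_tree k r"
  have bs: "bst T" unfolding T_def kr_tree_def by (rule label_bst)
  obtain A n where A: "atomic_seq T A" "n \<ge> 1" "X = concat (replicate n A)"
    using assms(3) unfolding whole_multiple_of_atomic_def T_def by blast
  have Ane: "A \<noteq> []" and rs: "\<forall>j\<ge>1. strongly_stable T (concat (replicate j A))"
    using A(1) unfolding atomic_seq_def rep_stable_def by auto
  have "concat (replicate (n + n) A) = X @ X" using A(3) by (simp add: replicate_add)
  then have st2: "strongly_stable T (X @ X)" using rs[rule_format, of "n + n"] A(2) by simp
  have g: "good T X" by (rule good_from_stable[OF bs st2])
  have lenX: "length X > 0" using A(2,3) Ane by (cases n) auto
  have gt: "gf_total T X = fcost T X"
    using gf_total_static[OF bs, of "[]" X] assms(2) unfolding T_def fcost_def by simp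
  have fc: "real (fcost T X) = real (length X) * crec k r"
    using kr_cost[of k r 1 X] g assms(1) unfolding T_def kr_tree_def by simp
  have beta: "\<beta> = 2 - 1 / 2 ^ k"
    using assms(5) sum_pow[of k] by (simp add: field_simps)
  have "cost_hat_GF X T = crec k r"
    unfolding cost_hat_GF_def gt using fc lenX by simp
  also have "\<dots> = 2 ^ k * \<beta> * (1 - \<alpha> ^ r) + \<alpha> ^ r"
    by (rule crec_closed[OF assms(4) beta])
  finally show ?thesis unfolding T_def .
qed

end
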